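(* Assume $E X_1<\infty$ and fix $\epsilon\in(0,\mu)$. For the $s$-th system define $$\kappa(V)=\inf\{k\ge 1: V_{n+1}\le n(\mu-\epsilon)/s \ \text{for all } n\ge k\},\qquad \kappa(A)=\inf\{k\ge1: |A_{n+1}|\ge n(\mu-\epsilon)/s\ \text{for all } n\ge k\},$$ and $\kappa=\max\{\kappa(V),\kappa(A)\}$. Then, as $s\to\infty$: (1) if $E V_1^{q}<\infty$ for some $q>2$, then $E_\pi^s\kappa=O(s^{q/(q-1)})$; (2) if moreover $E\exp(\theta V_1)<\infty$ for some $\theta>0$, then $E_\pi^s\kappa=O(s\log s)$.
   Context: Let $(X_n)_{n\ge1}$ be i.i.d. strictly positive random variables with mean $\mu=EX_1\in(0,\infty)$, and $(V_n)_{n\ge1}$ i.i.d. nonnegative random variables independent of $(X_n)$. For a scale parameter $s\in\{1,2,\dots\}$, the $s$-th system is the time-stationary GI/GI/$\infty$ queue whose arrival epochs form a time-stationary renewal process on $\mathbb R$ with interarrival times distributed as $X_1/s$; service times are not scaled. The arrival epochs in $(-\infty,0]$, counted backwards from $0$, are $0\ge A_1>A_2>\cdots$ with $A_n-A_{n+1}=X_n/s$ (and $|A_1|$ having the stationary-excess distribution of $X_1/s$, independent of $(X_n)$); the $n$-th customer has service requirement $V_n$, starts service immediately at $A_n$ and departs at $A_n+V_n$. $E_\pi^s$ denotes expectation for this stationary $s$-th system. $\inf\emptyset=\infty$. *)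

theory Defs
  imports "HOL-Probability.Probability"
begin

text \<open>Indexing convention (0-based shift of the paper's 1-based indices):
  X n = paper X_(n+1), V n = paper V_(n+1), A s n = paper A_(n+1) in the s-th system.\<close>

definition excess_density :: "'a measure \<Rightarrow> ('a \<Rightarrow> real) \<Rightarrow> real \<Rightarrow> ennreal" where
  "excess_density M Y x =
     (if 0 \<le> x then ennreal (measure M {\<omega> \<in> space M. Y \<omega> > x} / (\<integral>\<omega>. Y \<omega> \<partial>M)) else 0)"

text \<open>kappa(V) = inf{k \<ge> 1 : V_(n+1) \<le> n(\<mu>-\<epsilon>)/s for all n \<ge> k}; inf of empty set = \<infinity>.\<close>
definition kappaV :: "real \<Rightarrow> real \<Rightarrow> nat \<Rightarrow> (nat \<Rightarrow> 'a \<Rightarrow> real) \<Rightarrow> 'a \<Rightarrow> ennreal" where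
  "kappaV \<mu> \<epsilon> s V \<omega> =
     (INF k \<in> {k::nat. 1 \<le> k \<and> (\<forall>n\<ge>k. V n \<omega> \<le> real n * (\<mu> - \<epsilon>) / real s)}. ennreal (real k))"

definition kappaA :: "real \<Rightarrow> real \<Rightarrow> nat \<Rightarrow> (nat \<Rightarrow> 'a \<Rightarrow> real) \<Rightarrow> 'a \<Rightarrow> ennreal" where
  "kappaA \<mu> \<epsilon> s A \<omega> =
     (INF k \<in> {k::nat. 1 \<le> k \<and> (\<forall>n\<ge>k. \<bar>A n \<omega>\<bar> \<ge> real n * (\<mu> - \<epsilon>) / real s)}. ennreal (real k))"

definition kappa :: "real \<Rightarrow> real \<Rightarrow> nat \<Rightarrow> (nat \<Rightarrow> 'a \<Rightarrow> real) \<Rightarrow> (nat \<Rightarrow> 'a \<Rightarrow> real) \<Rightarrow> 'a \<Rightarrow> ennreal" where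
  "kappa \<mu> \<epsilon> s V A \<omega> = max (kappaV \<mu> \<epsilon> s V \<omega>) (kappaA \<mu> \<epsilon> s A \<omega>)"

end

theory Submission
  imports Defs
begin

lemma ennreal_ge_all_nat_top:
  fixes x :: ennreal
  assumes "\<And>N::nat. ennreal (real N) \<le> x" shows "x = top"
proof (rule ccontr)
  assume "x \<noteq> top"
  then obtain r where r: "x = ennreal r" "r \<ge> 0" by (cases x) auto
  obtain N :: nat where "r < real N" using reals_Archimedean2 by blast
  with assms[of N] r show False by (simp add: ennreal_le_iff2) 
qed

lemma kappa_gen:
  fixes P :: "nat \<Rightarrow> bool" and m :: nat
  assumes m: "1 \<le> m"
  shows "(INF k \<in> {k::nat. 1 \<le> k \<and> (\<forall>n\<ge>k. P n)}. ennreal (real k))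
     \<le> ennreal (real m) + (\<Sum>n. if m \<le> n \<and> \<not> P n then ennreal (real n) else 0)"
proof (cases "\<forall>N. \<exists>n\<ge>N. m \<le> n \<and> \<not> P n")
  case True
  have "(\<Sum>n. if m \<le> n \<and> \<not> P n then ennreal (real n) else 0) = top"
  proof (rule ennreal_ge_all_nat_top)
    fix N :: nat
    obtain n where n: "n \<ge> N" "m \<le> n" "\<not> P n" using True by blast
    have "ennreal (real N) \<le> ennreal (real n)" using n by simp
    also have "\<dots> = (\<Sum>i\<in>{n}. if m \<le> i \<and> \<not> P i then ennreal (real i) else 0)" using n by simp
    also have "\<dots> \<le> (\<Sum>n. if m \<le> n \<and> \<not> P n then ennreal (real n) else 0)"
      by (rule sum_le_suminf) auto
    finally show "ennreal (real N) \<le> \<dots>" .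
  qed
  then show ?thesis by simp
next
  case False
  then obtain N where N: "\<And>n. n \<ge> N \<Longrightarrow> m \<le> n \<Longrightarrow> P n" by auto
  define F where "F = {n. m \<le> n \<and> \<not> P n}"
  have finF: "finite F" 
    by (rule finite_subset[of _ "{..<N}"]) (auto simp: F_def, meson N not_le)
  show ?thesis
  proof (cases "F = {}")
    case True
    have "m \<in> {k::nat. 1 \<le> k \<and> (\<forall>n\<ge>k. P n)}" using True m by (auto simp: F_def)
    then have "(INF k \<in> {k::nat. 1 \<le> k \<and> (\<forall>n\<ge>k. P n)}. ennreal (real k)) \<le> ennreal (real m)"
      by (rule INF_lower)
    then show ?thesis by (rule order_trans) simp
  next
    case False
    define j where "j = Max F"
    have jF: "j \<in> F" using False finF by (simp add: j_def)
    have jmax: "\<And>n. n \<in> F \<Longrightarrow> n \<le> j" using finF by (simp add: j_def)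
    have "Suc j \<in> {k::nat. 1 \<le> k \<and> (\<forall>n\<ge>k. P n)}"
    proof safe
      fix n assume "Suc j \<le> n"
      then show "P n" using jmax[of n] jF by (force simp: F_def)
    qed simp
    then have "(INF k \<in> {k::nat. 1 \<le> k \<and> (\<forall>n\<ge>k. P n)}. ennreal (real k)) \<le> ennreal (real (Suc j))"
      by (rule INF_lower)
    also have "\<dots> \<le> ennreal (real m) + ennreal (real j)"
      using jF m by (simp add: F_def ennreal_plus[symmetric] del: ennreal_plus)
    also have "ennreal (real j) = (\<Sum>i\<in>{j}. if m \<le> i \<and> \<not> P i then ennreal (real i) else 0)"
      using jF by (simp add: F_def)
    also have "\<dots> \<le> (\<Sum>n. if m \<le> n \<and> \<not> P n then ennreal (real n) else 0)"
      by (rule sum_le_suminf) auto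
    finally show ?thesis by (simp add: add_left_mono)
  qed
qed


lemma sum_bound_sq:
  fixes Q :: "nat \<Rightarrow> bool" and m :: nat and x :: real
  assumes m: "1 \<le> m" and Q: "\<And>n. Q n \<Longrightarrow> real n < x"
  shows "(\<Sum>n. if m \<le> n \<and> Q n then ennreal (real n) else 0) \<le> ennreal (if real m < x then x^2 else 0)"
proof -
  define N where "N = nat \<lceil>x\<rceil>"
  have z: "(if m \<le> n \<and> Q n then ennreal (real n) else 0) = 0" if "n \<notin> {m..<N}" for n
    using that Q[of n] by (auto simp: N_def) linarith
  have eq: "(\<Sum>n. if m \<le> n \<and> Q n then ennreal (real n) else 0)
      = (\<Sum>n\<in>{m..<N}. if m \<le> n \<and> Q n then ennreal (real n) else 0)"
    by (rule suminf_finite) (use z in auto)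
  show ?thesis
  proof (cases "real m < x")
    case False
    have "{m..<N} = {}" using False by (auto simp: N_def)
    then show ?thesis using eq by simp
  next
    case True
    have "(\<Sum>n\<in>{m..<N}. if m \<le> n \<and> Q n then ennreal (real n) else 0) \<le> (\<Sum>n\<in>{m..<N}. ennreal x)"
    proof (rule sum_mono)
      fix n assume "n \<in> {m..<N}"
      then have "real n < x" by (auto simp: N_def) linarith
      then show "(if m \<le> n \<and> Q n then ennreal (real n) else 0) \<le> ennreal x"
        by (auto intro: ennreal_leI)
    qed
    also have "\<dots> = ennreal (real (N - m) * x)"
      using True m by (simp add: ennreal_mult' ennreal_of_nat_eq_real_of_nat)
    also have "\<dots> \<le> ennreal (x^2)"
    proof (rule ennreal_leI)
      have "real (N - m) \<le> x" using True m by (simp add: N_def) linarith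
      then show "real (N - m) * x \<le> x^2" using True m
        by (simp add: power2_eq_square mult_right_mono)
    qed
    finally show ?thesis using eq True by simp
  qed
qed


lemma summable_n_exp:
  fixes \<delta> :: real assumes "\<delta> > 0"
  shows "summable (\<lambda>n. real n * exp (- \<delta> * real n))"
proof (rule summable_comparison_test[where g="\<lambda>n. (2/\<delta>) * exp (-\<delta>/2) ^ n"])
  show "summable (\<lambda>n. (2/\<delta>) * exp (-\<delta>/2) ^ n)"
    using assms by (intro summable_mult summable_geometric) simp
  show "\<exists>N. \<forall>n\<ge>N. norm (real n * exp (- \<delta> * real n)) \<le> (2/\<delta>) * exp (-\<delta>/2) ^ n"
  proof (intro exI allI impI)
    fix n :: nat
    have e: "exp (-\<delta>/2) ^ n = exp (-\<delta>/2 * real n)"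
      by (simp add: exp_of_nat_mult[symmetric] mult.commute)
    have "\<delta> * real n / 2 \<le> exp (\<delta> * real n / 2)"
      using exp_ge_add_one_self[of "\<delta> * real n / 2"] by linarith
    then have "real n \<le> (2/\<delta>) * exp (\<delta> * real n / 2)" using assms by (simp add: field_simps)
    then have "real n * exp (- \<delta> * real n) \<le> (2/\<delta>) * exp (\<delta> * real n / 2) * exp (- \<delta> * real n)"
      by (rule mult_right_mono) simp
    also have "\<dots> = (2/\<delta>) * exp (-\<delta>/2 * real n)"
      by (simp add: mult.assoc exp_add[symmetric])
    finally show "norm (real n * exp (- \<delta> * real n)) \<le> (2/\<delta>) * exp (-\<delta>/2) ^ n"
      using e by simp
  qed
qed


locale qsetting = prob_space M for M :: "'a measure" +
  fixes X V :: "nat \<Rightarrow> 'a \<Rightarrow> real"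
    and A :: "nat \<Rightarrow> nat \<Rightarrow> 'a \<Rightarrow> real"
    and \<mu> \<epsilon> :: real
  assumes indep: "indep_vars (\<lambda>_. borel)
                  (\<lambda>i. case i of Inl n \<Rightarrow> X n | Inr n \<Rightarrow> V n) UNIV"
    and X_id: "\<And>n. distr M borel (X n) = distr M borel (X 0)"
    and V_id: "\<And>n. distr M borel (V n) = distr M borel (V 0)"
    and X_pos: "\<And>n. AE \<omega> in M. X n \<omega> > 0"
    and V_nonneg: "\<And>n. AE \<omega> in M. V n \<omega> \<ge> 0"
    and X_int: "integrable M (X 0)"
    and mu_def: "\<mu> = (\<integral>\<omega>. X 0 \<omega> \<partial>M)"
    and eps: "0 < \<epsilon>" "\<epsilon> < \<mu>"
    and A_step: "\<And>s n \<omega>. s \<ge> 1 \<Longrightarrow> \<omega> \<in> space M \<Longrightarrow> A s n \<omega> - A s (Suc n) \<omega> = X n \<omega> / real s"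
    and A_first: "\<And>s. s \<ge> 1 \<Longrightarrow> distributed M lborel (\<lambda>\<omega>. - A s 0 \<omega>)
                          (excess_density M (\<lambda>\<omega>. X 0 \<omega> / real s))"
begin

lemma X_meas[measurable]: "X n \<in> borel_measurable M"
proof -
  have "random_variable borel (case Inl n of Inl n \<Rightarrow> X n | Inr n \<Rightarrow> V n)"
    using indep unfolding indep_vars_def by blast
  then show ?thesis by simp
qed

lemma V_meas[measurable]: "V n \<in> borel_measurable M"
proof -
  have "random_variable borel (case Inr n of Inl n \<Rightarrow> X n | Inr n \<Rightarrow> V n)"
    using indep unfolding indep_vars_def by blast
  then show ?thesis by simp
qed

lemma A0_nonneg: assumes "s \<ge> 1" shows "AE \<omega> in M. - A s 0 \<omega> \<ge> 0"
proof -
  have d: "distributed M lborel (\<lambda>\<omega>. - A s 0 \<omega>) (excess_density M (\<lambda>\<omega>. X 0 \<omega> / real s))"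
    using A_first assms by blast
  have "emeasure M ((\<lambda>\<omega>. - A s 0 \<omega>) -` {..<0} \<inter> space M)
       = (\<integral>\<^sup>+x. excess_density M (\<lambda>\<omega>. X 0 \<omega> / real s) x * indicator {..<0::real} x \<partial>lborel)"
    by (rule distributed_emeasure[OF d]) simp
  also have "\<dots> = (\<integral>\<^sup>+(x::real). 0 \<partial>lborel)"
    by (intro nn_integral_cong) (simp add: excess_density_def indicator_def)
  also have "\<dots> = 0" by simp
  finally have z: "emeasure M ((\<lambda>\<omega>. - A s 0 \<omega>) -` {..<0} \<inter> space M) = 0" .
  have meas: "(\<lambda>\<omega>. - A s 0 \<omega>) \<in> borel_measurable M"
    using d by (simp add: distributed_def)
  show ?thesis
    by (rule AE_I[OF _ z]) (use meas in auto)
qed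

lemma A_formula:
  assumes "s \<ge> 1" "\<omega> \<in> space M"
  shows "A s n \<omega> = A s 0 \<omega> - (\<Sum>i<n. X i \<omega>) / real s"
proof (induction n)
  case (Suc n)
  have "A s (Suc n) \<omega> = A s n \<omega> - X n \<omega> / real s" using A_step[OF assms, of n] by simp
  with Suc show ?case by (simp add: diff_divide_distrib add_divide_distrib)
qed simp

lemma trunc_exists:
  "\<exists>T::nat. T \<ge> 1 \<and> expectation (\<lambda>\<omega>. max 0 (min (X 0 \<omega>) (real T))) > \<mu> - \<epsilon>"
proof -
  have lim: "(\<lambda>T::nat. expectation (\<lambda>\<omega>. max 0 (min (X 0 \<omega>) (real T)))) \<longlonglongrightarrow> expectation (X 0)"
  proof (rule integral_dominated_convergence[where w="\<lambda>\<omega>. \<bar>X 0 \<omega>\<bar>"])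
    show "integrable M (\<lambda>\<omega>. \<bar>X 0 \<omega>\<bar>)" using X_int by auto
    show "AE x in M. (\<lambda>T::nat. max 0 (min (X 0 x) (real T))) \<longlonglongrightarrow> X 0 x"
      using X_pos[of 0]
    proof eventually_elim
      case (elim x)
      have "\<forall>\<^sub>F T in sequentially. max 0 (min (X 0 x) (real T)) = X 0 x"
        using eventually_ge_at_top[of "nat \<lceil>X 0 x\<rceil>"]
        by eventually_elim (use elim in linarith)
      then show ?case by (rule tendsto_eventually)
    qed
    show "\<And>i. AE x in M. norm (max 0 (min (X 0 x) (real i))) \<le> \<bar>X 0 x\<bar>"
      by auto
  qed auto
  have "\<forall>\<^sub>F T in sequentially. expectation (\<lambda>\<omega>. max 0 (min (X 0 \<omega>) (real T))) > \<mu> - \<epsilon>"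
    using order_tendstoD(1)[OF lim, of "\<mu> - \<epsilon>"] eps mu_def by simp
  moreover have "\<forall>\<^sub>F T in sequentially. (1::nat) \<le> T" by (rule eventually_ge_at_top)
  ultimately have "\<forall>\<^sub>F T in sequentially. T \<ge> 1 \<and> expectation (\<lambda>\<omega>. max 0 (min (X 0 \<omega>) (real T))) > \<mu> - \<epsilon>"
    by eventually_elim auto
  then obtain N where "\<And>n. n \<ge> N \<Longrightarrow> n \<ge> 1 \<and> expectation (\<lambda>\<omega>. max 0 (min (X 0 \<omega>) (real n))) > \<mu> - \<epsilon>"
    unfolding eventually_sequentially by blast
  then have "N \<ge> 1 \<and> expectation (\<lambda>\<omega>. max 0 (min (X 0 \<omega>) (real N))) > \<mu> - \<epsilon>" by blast
  then show ?thesis by blast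
qed

lemma hoeff:
  fixes T :: nat and n :: nat and d :: real
  assumes T: "T \<ge> 1" and n: "n \<ge> 1" and d: "d \<ge> 0"
  defines "Y \<equiv> \<lambda>i \<omega>. max 0 (min ((case i of Inl n \<Rightarrow> X n | Inr n \<Rightarrow> V n) \<omega>) (real T))"
  shows "prob {\<omega>\<in>space M. (\<Sum>i\<in>Inl ` {..<n}. Y i \<omega>) / real (card (Inl ` {..<n} :: (nat+nat) set))
            \<le> expectation (Y (Inl 0)) - d} \<le> exp (-2 * real (card (Inl ` {..<n} :: (nat+nat) set)) * d\<^sup>2 / (real T - 0)\<^sup>2)"
proof -
  interpret H: Hoeffding_ineq_iid M "Inl ` {..<n}" Y "Y (Inl 0)" 0 "real T" "expectation (Y (Inl 0))"
  proof unfold_locales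
    show "finite (Inl ` {..<n} :: (nat+nat) set)" by simp
    have "indep_vars (\<lambda>_. borel) (\<lambda>i \<omega>. (\<lambda>x. max 0 (min x (real T))) ((case i of Inl n \<Rightarrow> X n | Inr n \<Rightarrow> V n) \<omega>)) UNIV"
      by (rule indep_vars_compose2[OF indep]) auto
    then show "indep_vars (\<lambda>_. borel) Y (Inl ` {..<n})"
      unfolding Y_def by (rule indep_vars_subset) simp
    show "random_variable borel (Y (Inl 0))" unfolding Y_def by simp
    show "AE x in M. Y (Inl 0) x \<in> {0..real T}" unfolding Y_def by auto
    fix i :: "nat + nat" assume "i \<in> Inl ` {..<n}"
    then obtain j where j: "i = Inl j" by auto
    have "distr M borel (Y i) = distr (distr M borel (X j)) borel (\<lambda>x. max 0 (min x (real T)))"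
      unfolding Y_def j by (subst distr_distr) (auto simp: comp_def)
    also have "\<dots> = distr (distr M borel (X 0)) borel (\<lambda>x. max 0 (min x (real T)))"
      by (simp only: X_id[of j])
    also have "\<dots> = distr M borel (Y (Inl 0))"
      unfolding Y_def by (subst distr_distr) (auto simp: comp_def)
    finally show "distr M borel (Y i) = distr M borel (Y (Inl 0))" .
  qed
  show ?thesis
    using n by (intro H.Hoeffding_ineq_le'[OF d]) (use T in \<open>auto simp: lessThan_empty_iff\<close>)
qed

end


context qsetting begin

lemma A_part:
  "\<exists>B::real. B \<ge> 0 \<and> (\<forall>s::nat. s \<ge> 1 \<longrightarrow>
     (\<integral>\<^sup>+\<omega>. (\<Sum>n. if 1 \<le> n \<and> \<not> (real n * (\<mu> - \<epsilon>) / real s \<le> \<bar>A s n \<omega>\<bar>) then ennreal (real n) else 0) \<partial>M)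
       \<le> ennreal B)"
proof -
  obtain T :: nat where T: "T \<ge> 1" and ET: "expectation (\<lambda>\<omega>. max 0 (min (X 0 \<omega>) (real T))) > \<mu> - \<epsilon>"
    using trunc_exists by blast
  define EY where "EY = expectation (\<lambda>\<omega>. max 0 (min (X 0 \<omega>) (real T)))"
  define d where "d = EY - (\<mu> - \<epsilon>)"
  define \<delta> where "\<delta> = 2 * d\<^sup>2 / (real T)\<^sup>2"
  have d: "d > 0" using ET by (simp add: d_def EY_def)
  have \<delta>: "\<delta> > 0" using d T by (simp add: \<delta>_def)
  define G where "G n = {\<omega>\<in>space M. (\<Sum>j<n. max 0 (min (X j \<omega>) (real T))) / real n \<le> EY - d}" for n
  have G_sets: "G n \<in> sets M" for n unfolding G_def by measurable
  have G_prob: "emeasure M (G n) \<le> ennreal (exp (- \<delta> * real n))" if n: "n \<ge> 1" for n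
  proof -
    define Y where "Y = (\<lambda>i \<omega>. max 0 (min ((case i of Inl n \<Rightarrow> X n | Inr n \<Rightarrow> V n) \<omega>) (real T)))"
    have c: "card (Inl ` {..<n} :: (nat+nat) set) = n" by (simp add: card_image)
    have s: "(\<Sum>i\<in>Inl ` {..<n}. Y i \<omega>) = (\<Sum>j<n. max 0 (min (X j \<omega>) (real T)))" for \<omega>
      by (subst sum.reindex) (auto simp: Y_def)
    have EYY: "expectation (Y (Inl 0)) = EY" by (simp add: Y_def EY_def)
    have h: "prob {\<omega>\<in>space M. (\<Sum>i\<in>Inl ` {..<n}. Y i \<omega>) / real n \<le> expectation (Y (Inl 0)) - d}
        \<le> exp (-2 * real n * d\<^sup>2 / (real T - 0)\<^sup>2)"
      using hoeff[OF T n, of d] d c by (simp add: Y_def)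
    have "{\<omega>\<in>space M. (\<Sum>i\<in>Inl ` {..<n}. Y i \<omega>) / real n \<le> expectation (Y (Inl 0)) - d} = G n"
      by (simp only: s EYY G_def)
    with h have "prob (G n) \<le> exp (-2 * real n * d\<^sup>2 / (real T - 0)\<^sup>2)" by simp
    also have "\<dots> = exp (- \<delta> * real n)" by (simp add: \<delta>_def)
    finally show ?thesis by (simp add: emeasure_eq_measure)
  qed
  have AEpos: "AE \<omega> in M. \<forall>j. X j \<omega> > 0" using X_pos by (simp add: AE_all_countable)
  define B where "B = (\<Sum>n. real n * exp (- \<delta> * real n))"
  have summ: "summable (\<lambda>n. real n * exp (- \<delta> * real n))" by (rule summable_n_exp[OF \<delta>])
  have nt: "(\<Sum>n. ennreal (real n * exp (- \<delta> * real n))) \<noteq> top"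
    by (rule ennreal_suminf_neq_top[OF summ]) simp
  have B0: "B \<ge> 0" unfolding B_def by (intro suminf_nonneg[OF summ]) simp
  show ?thesis
  proof (intro exI conjI allI impI, rule B0)
    fix s :: nat assume s: "s \<ge> 1"
    have AE1: "AE \<omega> in M. (\<Sum>n. if 1 \<le> n \<and> \<not> (real n * (\<mu> - \<epsilon>) / real s \<le> \<bar>A s n \<omega>\<bar>) then ennreal (real n) else 0)
       \<le> (\<Sum>n. ennreal (real n) * indicator (G n) \<omega>)"
      using AEpos A0_nonneg[OF s] AE_space
    proof eventually_elim
      case (elim \<omega>)
      show ?case
      proof (rule suminf_le, goal_cases)
        case (1 n)
        show ?case
        proof (cases "1 \<le> n \<and> \<not> (real n * (\<mu> - \<epsilon>) / real s \<le> \<bar>A s n \<omega>\<bar>)")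
          case True
          have sp: "\<omega> \<in> space M" by (rule elim(3))
          have "A s n \<omega> = A s 0 \<omega> - (\<Sum>i<n. X i \<omega>) / real s" by (rule A_formula[OF s sp])
          then have "(\<Sum>i<n. X i \<omega>) / real s \<le> \<bar>A s n \<omega>\<bar>" using elim(2) by linarith
          then have "(\<Sum>i<n. X i \<omega>) / real s < real n * (\<mu> - \<epsilon>) / real s" using True by linarith
          then have S: "(\<Sum>i<n. X i \<omega>) < real n * (\<mu> - \<epsilon>)" using s by (simp add: divide_strict_right_mono_neg divide_less_cancel)
          have "(\<Sum>j<n. max 0 (min (X j \<omega>) (real T))) \<le> (\<Sum>i<n. X i \<omega>)"
            by (intro sum_mono) (use elim(1) in \<open>auto intro: less_imp_le\<close>)
          then have "(\<Sum>j<n. max 0 (min (X j \<omega>) (real T))) / real n \<le> EY - d"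
            using S True by (simp add: d_def divide_le_eq mult.commute)
          then have "\<omega> \<in> G n" using sp by (simp add: G_def)
          then show ?thesis using True by simp
        qed auto
      qed auto
    qed
    have "(\<integral>\<^sup>+\<omega>. (\<Sum>n. if 1 \<le> n \<and> \<not> (real n * (\<mu> - \<epsilon>) / real s \<le> \<bar>A s n \<omega>\<bar>) then ennreal (real n) else 0) \<partial>M)
        \<le> (\<integral>\<^sup>+\<omega>. (\<Sum>n. ennreal (real n) * indicator (G n) \<omega>) \<partial>M)"
      by (rule nn_integral_mono_AE[OF AE1])
    also have "\<dots> = (\<Sum>n. \<integral>\<^sup>+\<omega>. ennreal (real n) * indicator (G n) \<omega> \<partial>M)"
      by (rule nn_integral_suminf[of "\<lambda>n \<omega>. ennreal (real n) * indicator (G n) \<omega>"]) (use G_sets in auto)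
    also have "\<dots> = (\<Sum>n. ennreal (real n) * emeasure M (G n))"
      using G_sets by (simp add: nn_integral_cmult_indicator)
    also have "\<dots> \<le> (\<Sum>n. ennreal (real n * exp (- \<delta> * real n)))"
    proof (rule suminf_le)
      fix n :: nat
      show "ennreal (real n) * emeasure M (G n) \<le> ennreal (real n * exp (- \<delta> * real n))"
      proof (cases "n = 0")
        case False
        then have "ennreal (real n) * emeasure M (G n) \<le> ennreal (real n) * ennreal (exp (- \<delta> * real n))"
          using G_prob[of n] by (intro mult_left_mono) auto
        then show ?thesis by (simp add: ennreal_mult)
      qed simp
    qed auto
    also have "(\<Sum>n. ennreal (real n * exp (- \<delta> * real n))) = ennreal B" unfolding B_def
      by (rule suminf_ennreal[OF _ nt]) simp
    finally show "(\<integral>\<^sup>+\<omega>. (\<Sum>n. if 1 \<le> n \<and> \<not> (real n * (\<mu> - \<epsilon>) / real s \<le> \<bar>A s n \<omega>\<bar>) then ennreal (real n) else 0) \<partial>M) \<le> ennreal B" .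
  qed
qed

end


context qsetting begin

lemma V_part:
  fixes s m :: nat
  assumes s: "s \<ge> 1" and m: "m \<ge> 1"
  defines "c \<equiv> \<mu> - \<epsilon>"
  shows "(\<integral>\<^sup>+\<omega>. (\<Sum>n. if m \<le> n \<and> \<not> (V n \<omega> \<le> real n * (\<mu> - \<epsilon>) / real s) then ennreal (real n) else 0) \<partial>M)
     \<le> (\<integral>\<^sup>+\<omega>. ennreal (if real m < V 0 \<omega> * real s / c then (V 0 \<omega> * real s / c)^2 else 0) \<partial>M)"
proof -
  have c: "c > 0" using eps by (simp add: c_def)
  define g where "g n x = (if m \<le> n \<and> \<not> (x \<le> real n * (\<mu> - \<epsilon>) / real s) then ennreal (real n) else 0)" for n x
  have gm[measurable]: "g n \<in> borel_measurable borel" for n unfolding g_def by measurable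
  have "(\<integral>\<^sup>+\<omega>. (\<Sum>n. if m \<le> n \<and> \<not> (V n \<omega> \<le> real n * (\<mu> - \<epsilon>) / real s) then ennreal (real n) else 0) \<partial>M)
      = (\<integral>\<^sup>+\<omega>. (\<Sum>n. g n (V n \<omega>)) \<partial>M)" by (simp add: g_def)
  also have "\<dots> = (\<Sum>n. \<integral>\<^sup>+\<omega>. g n (V n \<omega>) \<partial>M)"
    by (rule nn_integral_suminf[of "\<lambda>n \<omega>. g n (V n \<omega>)"]) simp
  also have "\<dots> = (\<Sum>n. \<integral>\<^sup>+\<omega>. g n (V 0 \<omega>) \<partial>M)"
  proof (rule suminf_cong)
    fix n
    have "(\<integral>\<^sup>+\<omega>. g n (V n \<omega>) \<partial>M) = (\<integral>\<^sup>+x. g n x \<partial>distr M borel (V n))"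
      by (rule nn_integral_distr[symmetric]) simp_all
    also have "\<dots> = (\<integral>\<^sup>+x. g n x \<partial>distr M borel (V 0))" by (simp only: V_id[of n])
    also have "\<dots> = (\<integral>\<^sup>+\<omega>. g n (V 0 \<omega>) \<partial>M)"
      by (rule nn_integral_distr) simp_all
    finally show "(\<integral>\<^sup>+\<omega>. g n (V n \<omega>) \<partial>M) = (\<integral>\<^sup>+\<omega>. g n (V 0 \<omega>) \<partial>M)" .
  qed
  also have "\<dots> = (\<integral>\<^sup>+\<omega>. (\<Sum>n. g n (V 0 \<omega>)) \<partial>M)"
    by (rule nn_integral_suminf[of "\<lambda>n \<omega>. g n (V 0 \<omega>)", symmetric]) simp
  also have "\<dots> \<le> (\<integral>\<^sup>+\<omega>. ennreal (if real m < V 0 \<omega> * real s / c then (V 0 \<omega> * real s / c)^2 else 0) \<partial>M)"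
  proof (rule nn_integral_mono)
    fix \<omega>
    have "(\<Sum>n. g n (V 0 \<omega>)) = (\<Sum>n. if m \<le> n \<and> \<not> (V 0 \<omega> \<le> real n * (\<mu> - \<epsilon>) / real s) then ennreal (real n) else 0)"
      by (simp add: g_def)
    also have "\<dots> \<le> ennreal (if real m < V 0 \<omega> * real s / c then (V 0 \<omega> * real s / c)^2 else 0)"
    proof (rule sum_bound_sq[OF m])
      fix n assume "\<not> V 0 \<omega> \<le> real n * (\<mu> - \<epsilon>) / real s"
      then have "real n * c < V 0 \<omega> * real s" using s by (simp add: c_def field_simps)
      then show "real n < V 0 \<omega> * real s / c" using c by (simp add: field_simps)
    qed
    finally show "(\<Sum>n. g n (V 0 \<omega>)) \<le> ennreal (if real m < V 0 \<omega> * real s / c then (V 0 \<omega> * real s / c)^2 else 0)" .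
  qed
  finally show ?thesis .
qed

end


context qsetting begin

lemma A_meas: assumes s: "s \<ge> 1" shows "A s n \<in> borel_measurable M"
proof -
  have d: "(\<lambda>\<omega>. - A s 0 \<omega>) \<in> borel_measurable M" using A_first[OF s] by (simp add: distributed_def)
  have a0: "A s 0 \<in> borel_measurable M" using borel_measurable_uminus[OF d] by simp
  have m: "(\<lambda>\<omega>. A s 0 \<omega> - (\<Sum>i<n. X i \<omega>) / real s) \<in> borel_measurable M"
    using a0 by measurable
  have e: "\<And>\<omega>. \<omega> \<in> space M \<Longrightarrow> A s 0 \<omega> - (\<Sum>i<n. X i \<omega>) / real s = A s n \<omega>"
    by (rule sym, rule A_formula[OF s])
  show ?thesis using measurable_cong[of M "\<lambda>\<omega>. A s 0 \<omega> - (\<Sum>i<n. X i \<omega>) / real s" "A s n" borel] e m by blast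
qed

lemma combine:
  "\<exists>B::real. B \<ge> 0 \<and> (\<forall>s m::nat. s \<ge> 1 \<longrightarrow> m \<ge> 1 \<longrightarrow>
     (\<integral>\<^sup>+\<omega>. kappa \<mu> \<epsilon> s V (A s) \<omega> \<partial>M) \<le> ennreal (real m + 1 + B) +
       (\<integral>\<^sup>+\<omega>. ennreal (if real m < V 0 \<omega> * real s / (\<mu> - \<epsilon>) then (V 0 \<omega> * real s / (\<mu> - \<epsilon>))^2 else 0) \<partial>M))"
proof -
  obtain B where B0: "B \<ge> 0" and B: "\<And>s::nat. s \<ge> 1 \<Longrightarrow>
     (\<integral>\<^sup>+\<omega>. (\<Sum>n. if 1 \<le> n \<and> \<not> (real n * (\<mu> - \<epsilon>) / real s \<le> \<bar>A s n \<omega>\<bar>) then ennreal (real n) else 0) \<partial>M)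
       \<le> ennreal B"
    using A_part by blast
  show ?thesis
  proof (intro exI conjI allI impI, rule B0)
    fix s m :: nat assume s: "s \<ge> 1" and m: "m \<ge> 1"
    define fV where "fV \<omega> = (\<Sum>n. if m \<le> n \<and> \<not> (V n \<omega> \<le> real n * (\<mu> - \<epsilon>) / real s) then ennreal (real n) else 0)" for \<omega>
    define fA where "fA \<omega> = (\<Sum>n. if 1 \<le> n \<and> \<not> (real n * (\<mu> - \<epsilon>) / real s \<le> \<bar>A s n \<omega>\<bar>) then ennreal (real n) else 0)" for \<omega>
    have Am[measurable]: "A s n \<in> borel_measurable M" for n by (rule A_meas[OF s])
    have fVm: "fV \<in> borel_measurable M" unfolding fV_def by measurable
    have fAm: "fA \<in> borel_measurable M" unfolding fA_def by measurable
    have pw: "kappa \<mu> \<epsilon> s V (A s) \<omega> \<le> (ennreal (real m) + fV \<omega>) + (ennreal (real 1) + fA \<omega>)" for \<omega>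
    proof -
      have kv: "kappaV \<mu> \<epsilon> s V \<omega> \<le> ennreal (real m) + fV \<omega>"
        unfolding kappaV_def fV_def by (rule kappa_gen[OF m])
      have ka: "kappaA \<mu> \<epsilon> s (A s) \<omega> \<le> ennreal (real 1) + fA \<omega>"
        unfolding kappaA_def fA_def by (rule kappa_gen) simp
      have l1: "ennreal (real m) + fV \<omega> \<le> (ennreal (real m) + fV \<omega>) + (ennreal (real 1) + fA \<omega>)"
        by (rule add_increasing2) auto
      have l2: "ennreal (real 1) + fA \<omega> \<le> (ennreal (real m) + fV \<omega>) + (ennreal (real 1) + fA \<omega>)"
        by (rule add_increasing) auto
      show ?thesis unfolding kappa_def
        by (rule max.boundedI) (rule order_trans[OF kv l1], rule order_trans[OF ka l2])
    qed
    have "(\<integral>\<^sup>+\<omega>. kappa \<mu> \<epsilon> s V (A s) \<omega> \<partial>M) \<le> (\<integral>\<^sup>+\<omega>. (ennreal (real m) + fV \<omega>) + (ennreal (real 1) + fA \<omega>) \<partial>M)"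
      by (rule nn_integral_mono) (rule pw)
    also have "\<dots> = (\<integral>\<^sup>+\<omega>. ennreal (real m) + fV \<omega> \<partial>M) + (\<integral>\<^sup>+\<omega>. ennreal (real 1) + fA \<omega> \<partial>M)"
      by (rule nn_integral_add) (use fVm fAm in auto)
    also have "(\<integral>\<^sup>+\<omega>. ennreal (real m) + fV \<omega> \<partial>M) = ennreal (real m) + (\<integral>\<^sup>+\<omega>. fV \<omega> \<partial>M)"
      by (subst nn_integral_add) (use fVm in \<open>auto simp: emeasure_space_1\<close>)
    also have "(\<integral>\<^sup>+\<omega>. ennreal (real 1) + fA \<omega> \<partial>M) = ennreal (real 1) + (\<integral>\<^sup>+\<omega>. fA \<omega> \<partial>M)"
      by (subst nn_integral_add) (use fAm in \<open>auto simp: emeasure_space_1\<close>)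
    finally have k: "(\<integral>\<^sup>+\<omega>. kappa \<mu> \<epsilon> s V (A s) \<omega> \<partial>M) \<le> ennreal (real m) + (\<integral>\<^sup>+\<omega>. fV \<omega> \<partial>M) + (ennreal (real 1) + (\<integral>\<^sup>+\<omega>. fA \<omega> \<partial>M))" .
    have a: "(\<integral>\<^sup>+\<omega>. fA \<omega> \<partial>M) \<le> ennreal B" unfolding fA_def by (rule B[OF s])
    have v: "(\<integral>\<^sup>+\<omega>. fV \<omega> \<partial>M) \<le> (\<integral>\<^sup>+\<omega>. ennreal (if real m < V 0 \<omega> * real s / (\<mu> - \<epsilon>) then (V 0 \<omega> * real s / (\<mu> - \<epsilon>))^2 else 0) \<partial>M)"
      unfolding fV_def by (rule V_part[OF s m])
    have "ennreal (real m) + (\<integral>\<^sup>+\<omega>. fV \<omega> \<partial>M) + (ennreal (real 1) + (\<integral>\<^sup>+\<omega>. fA \<omega> \<partial>M))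
      \<le> ennreal (real m) + (\<integral>\<^sup>+\<omega>. ennreal (if real m < V 0 \<omega> * real s / (\<mu> - \<epsilon>) then (V 0 \<omega> * real s / (\<mu> - \<epsilon>))^2 else 0) \<partial>M) + (ennreal (real 1) + ennreal B)"
      by (intro add_mono order_refl a v)
    also have "\<dots> = ennreal (real m + 1 + B) +
       (\<integral>\<^sup>+\<omega>. ennreal (if real m < V 0 \<omega> * real s / (\<mu> - \<epsilon>) then (V 0 \<omega> * real s / (\<mu> - \<epsilon>))^2 else 0) \<partial>M)"
      using B0 by (simp add: ennreal_plus add_ac)
    finally show "(\<integral>\<^sup>+\<omega>. kappa \<mu> \<epsilon> s V (A s) \<omega> \<partial>M) \<le> ennreal (real m + 1 + B) +
       (\<integral>\<^sup>+\<omega>. ennreal (if real m < V 0 \<omega> * real s / (\<mu> - \<epsilon>) then (V 0 \<omega> * real s / (\<mu> - \<epsilon>))^2 else 0) \<partial>M)"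
      using k by (rule order_trans[rotated])
  qed
qed

end


context qsetting begin

lemma part1:
  fixes q :: real assumes q: "q > 2" and int: "integrable M (\<lambda>\<omega>. V 0 \<omega> powr q)"
  shows "\<exists>C::real. eventually (\<lambda>s::nat.
               (\<integral>\<^sup>+ \<omega>. kappa \<mu> \<epsilon> s V (A s) \<omega> \<partial>M) \<le> ennreal (C * real s powr (q / (q - 1)))) sequentially"
proof -
  obtain B where B0: "B \<ge> 0" and B: "\<And>s m::nat. s \<ge> 1 \<Longrightarrow> m \<ge> 1 \<Longrightarrow>
     (\<integral>\<^sup>+\<omega>. kappa \<mu> \<epsilon> s V (A s) \<omega> \<partial>M) \<le> ennreal (real m + 1 + B) +
       (\<integral>\<^sup>+\<omega>. ennreal (if real m < V 0 \<omega> * real s / (\<mu> - \<epsilon>) then (V 0 \<omega> * real s / (\<mu> - \<epsilon>))^2 else 0) \<partial>M)"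
    using combine by blast
  define c where "c = \<mu> - \<epsilon>"
  have c: "c > 0" using eps by (simp add: c_def)
  define p where "p = q / (q - 1)"
  have p: "p > 0" using q by (simp add: p_def)
  define E where "E = (\<integral>\<omega>. V 0 \<omega> powr q \<partial>M)"
  have E0: "E \<ge> 0" unfolding E_def by simp
  define C where "C = 3 + B + E / c powr q"
  show ?thesis
  proof (intro exI eventually_sequentiallyI)
    fix s :: nat assume s: "s \<ge> 1"
    have s1: "real s \<ge> 1" using s by simp
    have sp1: "real s powr p \<ge> 1" using s1 p by (simp add: ge_one_powr_ge_zero)
    define m where "m = nat \<lceil>real s powr p\<rceil>"
    have "1 \<le> \<lceil>real s powr p\<rceil>" using sp1 s by (simp add: one_le_ceiling)
    then have m1: "m \<ge> 1" unfolding m_def by linarith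
    have mge: "real m \<ge> real s powr p" by (simp add: m_def)
    have mle: "real m \<le> real s powr p + 1" unfolding m_def using sp1 by linarith
    define K where "K = (real s / c) powr q / real m powr (q - 2)"
    have K0: "K \<ge> 0" by (simp add: K_def)
    have Hb: "(if real m < v * real s / c then (v * real s / c)^2 else 0) \<le> K * v powr q" for v
    proof (cases "real m < v * real s / c")
      case True
      define x where "x = v * real s / c"
      have x: "x > real m" "x > 0" using True m1 by (auto simp: x_def)
      have v: "v > 0" using x c s1 by (auto simp: x_def field_simps zero_less_mult_iff zero_less_divide_iff)
      have "x^2 * real m powr (q - 2) \<le> x powr 2 * x powr (q - 2)"
        using x q m1 by (intro mult_mono powr_mono2) (auto simp: powr_numeral)
      also have "\<dots> = x powr q" by (simp add: powr_add[symmetric])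
      also have "x powr q = (real s / c) powr q * v powr q"
        unfolding x_def using v c by (simp add: powr_mult[symmetric] field_simps)
      finally have "x^2 \<le> (real s / c) powr q * v powr q / real m powr (q - 2)"
        using m1 by (simp add: field_simps)
      then show ?thesis using True by (simp add: x_def K_def field_simps)
    qed (use K0 in simp)
    have "(\<integral>\<^sup>+\<omega>. ennreal (if real m < V 0 \<omega> * real s / (\<mu> - \<epsilon>) then (V 0 \<omega> * real s / (\<mu> - \<epsilon>))^2 else 0) \<partial>M)
        \<le> (\<integral>\<^sup>+\<omega>. ennreal (K * V 0 \<omega> powr q) \<partial>M)"
      by (intro nn_integral_mono ennreal_leI) (use Hb[unfolded c_def] in blast)
    also have "\<dots> = ennreal (K * E)"
      unfolding E_def using int K0
      by (subst nn_integral_eq_integral) auto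
    finally have I: "(\<integral>\<^sup>+\<omega>. ennreal (if real m < V 0 \<omega> * real s / (\<mu> - \<epsilon>) then (V 0 \<omega> * real s / (\<mu> - \<epsilon>))^2 else 0) \<partial>M)
        \<le> ennreal (K * E)" .
    have Kle: "K \<le> real s powr p / c powr q"
    proof -
      have sq: "real s powr q = real s powr p * real s powr (p * (q - 2))"
      proof -
        have "p + p * (q - 2) = p * (q - 1)" by (simp add: algebra_simps)
        also have "\<dots> = q" using q by (simp add: p_def)
        finally have "p + p * (q - 2) = q" .
        then show ?thesis using powr_add[of "real s" p "p*(q-2)"] by simp
      qed
      have "real s powr (p * (q - 2)) = (real s powr p) powr (q - 2)" by (simp add: powr_powr)
      also have "\<dots> \<le> real m powr (q - 2)" using mge q by (intro powr_mono2) auto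
      finally have ml: "real s powr (p * (q - 2)) \<le> real m powr (q - 2)" .
      have pos: "real s powr (p * (q - 2)) > 0" using s1 by simp
      have "K = real s powr p * real s powr (p * (q - 2)) / c powr q / real m powr (q - 2)"
        unfolding K_def using c s1 by (simp add: powr_divide sq)
      also have "\<dots> \<le> real s powr p * real m powr (q - 2) / c powr q / real m powr (q - 2)"
        using ml c by (intro divide_right_mono mult_left_mono) auto
      also have "\<dots> = real s powr p / c powr q" using m1 by simp
      finally show ?thesis .
    qed
    have "(\<integral>\<^sup>+\<omega>. kappa \<mu> \<epsilon> s V (A s) \<omega> \<partial>M) \<le> ennreal (real m + 1 + B) + ennreal (K * E)"
      using B[OF s m1] I by (rule order_trans[OF _ add_left_mono])
    also have "\<dots> = ennreal (real m + 1 + B + K * E)" using B0 K0 E0 by (simp add: ennreal_plus)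
    also have "\<dots> \<le> ennreal (C * real s powr p)"
    proof (rule ennreal_leI)
      have "K * E \<le> real s powr p / c powr q * E" using Kle E0 by (rule mult_right_mono)
      moreover have "B \<le> B * real s powr p" using B0 sp1 by (simp add: mult_le_cancel_left1)
      moreover have "C * real s powr p = 3 * real s powr p + B * real s powr p + real s powr p / c powr q * E"
        unfolding C_def by (simp add: algebra_simps)
      ultimately show "real m + 1 + B + K * E \<le> C * real s powr p"
        using mle sp1 by linarith
    qed
    finally show "(\<integral>\<^sup>+\<omega>. kappa \<mu> \<epsilon> s V (A s) \<omega> \<partial>M) \<le> ennreal (C * real s powr (q / (q - 1)))"
      by (simp add: p_def)
  qed
qed

lemma part2:
  fixes \<theta> :: real assumes th: "\<theta> > 0" and int: "integrable M (\<lambda>\<omega>. exp (\<theta> * V 0 \<omega>))"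
  shows "\<exists>C::real. eventually (\<lambda>s::nat.
               (\<integral>\<^sup>+ \<omega>. kappa \<mu> \<epsilon> s V (A s) \<omega> \<partial>M) \<le> ennreal (C * real s * ln (real s))) sequentially"
proof -
  obtain B where B0: "B \<ge> 0" and B: "\<And>s m::nat. s \<ge> 1 \<Longrightarrow> m \<ge> 1 \<Longrightarrow>
     (\<integral>\<^sup>+\<omega>. kappa \<mu> \<epsilon> s V (A s) \<omega> \<partial>M) \<le> ennreal (real m + 1 + B) +
       (\<integral>\<^sup>+\<omega>. ennreal (if real m < V 0 \<omega> * real s / (\<mu> - \<epsilon>) then (V 0 \<omega> * real s / (\<mu> - \<epsilon>))^2 else 0) \<partial>M)"
    using combine by blast
  define c where "c = \<mu> - \<epsilon>"
  have c: "c > 0" using eps by (simp add: c_def)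
  define E where "E = (\<integral>\<omega>. exp (\<theta> * V 0 \<omega>) \<partial>M)"
  have E0: "E \<ge> 0" unfolding E_def by simp
  define K0 where "K0 = 2 / (\<theta> * c)"
  have K0: "K0 > 0" using th c by (simp add: K0_def)
  define K2 where "K2 = 16 / (c^2 * \<theta>^2) * E"
  have K2: "K2 \<ge> 0" using E0 by (simp add: K2_def)
  define C where "C = K0 + 2 + B + K2"
  show ?thesis
  proof (intro exI eventually_sequentiallyI)
    fix s :: nat assume s: "s \<ge> 3"
    have s1: "real s \<ge> 3" using s by simp
    have ln1: "ln (real s) \<ge> 1"
    proof -
      have "exp 1 \<le> real s" using exp_le s1 by linarith
      then show ?thesis using ln_ge_iff[of "real s" 1] s1 by simp
    qed
    have sl: "real s * ln (real s) \<ge> real s" using ln1 s1 by (simp add: mult_le_cancel_left1)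
    define m where "m = nat \<lceil>K0 * real s * ln (real s)\<rceil>"
    have pos: "K0 * real s * ln (real s) > 0" using K0 s1 ln1 by simp
    have "1 \<le> \<lceil>K0 * real s * ln (real s)\<rceil>" using pos by (simp add: one_le_ceiling)
    then have m1: "m \<ge> 1" unfolding m_def by linarith
    have mge: "real m \<ge> K0 * real s * ln (real s)" unfolding m_def using pos by linarith
    have mle: "real m \<le> K0 * real s * ln (real s) + 1" unfolding m_def using pos by linarith
    define K where "K = real s * (16 / (c^2 * \<theta>^2))"
    have K0': "K \<ge> 0" by (simp add: K_def)
    have Hb: "(if real m < v * real s / c then (v * real s / c)^2 else 0) \<le> K * exp (\<theta> * v)" for v
    proof (cases "real m < v * real s / c")
      case True
      have v: "v * real s / c > K0 * real s * ln (real s)" using True mge by linarith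
      then have "v > K0 * ln (real s) * c" using s1 c by (simp add: field_simps)
      then have "v > 2 * ln (real s) / \<theta>" using th c by (simp add: K0_def field_simps)
      then have lv: "\<theta> * v / 2 > ln (real s)" using th by (simp add: field_simps)
      have vpos: "v > 0" using lv ln1 th by (smt (verit) zero_less_mult_iff zero_less_divide_iff)
      have es: "exp (\<theta> * v / 2) \<ge> real s"
        using lv s1 by (smt (verit) exp_ln exp_less_cancel_iff)
      have e4: "exp (\<theta> * v / 4) \<ge> \<theta> * v / 4" using exp_ge_add_one_self[of "\<theta> * v / 4"] by linarith
      have "(\<theta> * v / 4)^2 \<le> (exp (\<theta> * v / 4))^2"
        using e4 vpos th by (intro power_mono) auto
      also have "(exp (\<theta> * v / 4))^2 = exp (\<theta> * v / 2)"
        by (simp add: power2_eq_square exp_add[symmetric])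
      finally have v2: "v^2 \<le> 16 / \<theta>^2 * exp (\<theta> * v / 2)" using th by (simp add: field_simps power2_eq_square)
      have ex: "exp (\<theta> * v) = exp (\<theta> * v / 2) * exp (\<theta> * v / 2)" by (simp add: exp_add[symmetric])
      have "(v * real s / c)^2 = (real s)^2 / c^2 * v^2" by (simp add: field_simps power2_eq_square)
      also have "\<dots> \<le> (real s)^2 / c^2 * (16 / \<theta>^2 * exp (\<theta> * v / 2))"
        using v2 c by (intro mult_left_mono) auto
      also have "\<dots> = real s * (16 / (c^2 * \<theta>^2)) * (real s * exp (\<theta> * v / 2))"
        by (simp add: field_simps power2_eq_square)
      also have "\<dots> \<le> real s * (16 / (c^2 * \<theta>^2)) * (exp (\<theta> * v / 2) * exp (\<theta> * v / 2))"
        using es s1 by (intro mult_left_mono mult_right_mono) auto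
      also have "\<dots> = K * exp (\<theta> * v)" using ex by (simp add: K_def)
      finally show ?thesis using True by simp
    qed (use K0' in simp)
    have "(\<integral>\<^sup>+\<omega>. ennreal (if real m < V 0 \<omega> * real s / (\<mu> - \<epsilon>) then (V 0 \<omega> * real s / (\<mu> - \<epsilon>))^2 else 0) \<partial>M)
        \<le> (\<integral>\<^sup>+\<omega>. ennreal (K * exp (\<theta> * V 0 \<omega>)) \<partial>M)"
      by (intro nn_integral_mono ennreal_leI) (use Hb[unfolded c_def] in blast)
    also have "\<dots> = ennreal (K * E)"
      unfolding E_def using int K0'
      by (subst nn_integral_eq_integral) auto
    finally have I: "(\<integral>\<^sup>+\<omega>. ennreal (if real m < V 0 \<omega> * real s / (\<mu> - \<epsilon>) then (V 0 \<omega> * real s / (\<mu> - \<epsilon>))^2 else 0) \<partial>M)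
        \<le> ennreal (K * E)" .
    have "(\<integral>\<^sup>+\<omega>. kappa \<mu> \<epsilon> s V (A s) \<omega> \<partial>M) \<le> ennreal (real m + 1 + B) + ennreal (K * E)"
    proof -
      have s1': "s \<ge> 1" using s by simp
      show ?thesis using B[OF s1' m1] I by (rule order_trans[OF _ add_left_mono])
    qed
    also have "\<dots> = ennreal (real m + 1 + B + K * E)" using B0 K0' E0 by (simp add: ennreal_plus)
    also have "\<dots> \<le> ennreal (C * real s * ln (real s))"
    proof (rule ennreal_leI)
      have KE: "K * E = real s * K2" by (simp add: K_def K2_def)
      have L: "real s * ln (real s) \<ge> 1" using sl s1 by linarith
      have "B \<le> B * (real s * ln (real s))" using B0 L by (simp add: mult_le_cancel_left1)
      moreover have "real s * K2 \<le> real s * ln (real s) * K2" using sl K2 by (rule mult_right_mono)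
      moreover have "C * real s * ln (real s) = K0 * real s * ln (real s) + 2 * (real s * ln (real s)) + B * (real s * ln (real s)) + real s * ln (real s) * K2"
        unfolding C_def by (simp add: algebra_simps)
      ultimately show "real m + 1 + B + K * E \<le> C * real s * ln (real s)"
        using mle L KE by linarith
    qed
    finally show "(\<integral>\<^sup>+\<omega>. kappa \<mu> \<epsilon> s V (A s) \<omega> \<partial>M) \<le> ennreal (C * real s * ln (real s))" .
  qed
qed

end


theorem theorem1:
  fixes M :: "'a measure"
    and X V :: "nat \<Rightarrow> 'a \<Rightarrow> real"
    and A :: "nat \<Rightarrow> nat \<Rightarrow> 'a \<Rightarrow> real"
    and \<mu> \<epsilon> :: real
  assumes "prob_space M"
    and indep: "prob_space.indep_vars M (\<lambda>_. borel)
                  (\<lambda>i. case i of Inl n \<Rightarrow> X n | Inr n \<Rightarrow> V n) UNIV"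
    and X_id: "\<And>n. distr M borel (X n) = distr M borel (X 0)"
    and V_id: "\<And>n. distr M borel (V n) = distr M borel (V 0)"
    and X_pos: "\<And>n. AE \<omega> in M. X n \<omega> > 0"
    and V_nonneg: "\<And>n. AE \<omega> in M. V n \<omega> \<ge> 0"
    and X_int: "integrable M (X 0)"
    and mu_def: "\<mu> = (\<integral>\<omega>. X 0 \<omega> \<partial>M)"
    and eps: "0 < \<epsilon>" "\<epsilon> < \<mu>"
    and A_step: "\<And>s n \<omega>. s \<ge> 1 \<Longrightarrow> \<omega> \<in> space M \<Longrightarrow> A s n \<omega> - A s (Suc n) \<omega> = X n \<omega> / real s"
    and A_first: "\<And>s. s \<ge> 1 \<Longrightarrow> distributed M lborel (\<lambda>\<omega>. - A s 0 \<omega>)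
                          (excess_density M (\<lambda>\<omega>. X 0 \<omega> / real s))"
    and A_indep: "\<And>s. s \<ge> 1 \<Longrightarrow> prob_space.indep_vars M (\<lambda>_. borel)
                     (\<lambda>i. case i of None \<Rightarrow> (\<lambda>\<omega>. - A s 0 \<omega>)
                                | Some (Inl n) \<Rightarrow> X n | Some (Inr n) \<Rightarrow> V n) UNIV"
  shows "(\<forall>q::real. q > 2 \<longrightarrow> integrable M (\<lambda>\<omega>. V 0 \<omega> powr q) \<longrightarrow>
            (\<exists>C::real. eventually (\<lambda>s::nat.
               (\<integral>\<^sup>+ \<omega>. kappa \<mu> \<epsilon> s V (A s) \<omega> \<partial>M) \<le> ennreal (C * real s powr (q / (q - 1))))
             sequentially))
       \<and> (\<forall>\<theta>::real. \<theta> > 0 \<longrightarrow> integrable M (\<lambda>\<omega>. exp (\<theta> * V 0 \<omega>)) \<longrightarrow>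
            (\<exists>C::real. eventually (\<lambda>s::nat.
               (\<integral>\<^sup>+ \<omega>. kappa \<mu> \<epsilon> s V (A s) \<omega> \<partial>M) \<le> ennreal (C * real s * ln (real s)))
             sequentially))"
proof -
  interpret qsetting M X V A \<mu> \<epsilon>
    by (intro qsetting.intro qsetting_axioms.intro) (fact assms)+
  show ?thesis using part1 part2 by blast
qed

end
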